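(* Let $\bar r\in(0,1)$ be a local minimum point of $F$. Then $$\lim_{r\to\bar r^-}\partial_rG(r,\bar r)=-\lim_{r\to\bar r^+}\partial_rG(r,\bar r)=\frac12.$$
   Context: Let $n\ge2$, $|\partial B_1|$ the $(n-1)$-dimensional measure of the unit sphere in $\mathbb{R}^n$, and $V\ge0$, $V\not\equiv0$, a smooth function on $[0,1]$ (the profile of a smooth radial potential on the unit ball). For $s\in(0,1)$, $G(\cdot,s)$ is the Green function of $\mathcal{L}u=-u''-\frac{n-1}{r}u'+V(r)u$ on $(0,1)$ with $u'(0)=0$ and $u'(1)=0$: that is, $-\partial_r^2G(r,s)-\frac{n-1}{r}\partial_rG(r,s)+V(r)G(r,s)=\delta_s$ in distributions on $(0,1)$ (Dirac mass w.r.t. $dr$), $\partial_rG(0,s)=\partial_rG(1,s)=0$. $F(r)=|\partial B_1|\,r^{n-1}/G(r,r)$ for $r\in(0,1)$. *)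

theory Defs
  imports "HOL-Analysis.Analysis"
begin

text \<open>(n-1)-dimensional measure of the unit sphere in R^n: n times the volume of the unit ball.\<close>
definition sphere_area :: "nat \<Rightarrow> real" where
  "sphere_area n = real n * unit_ball_vol (real n)"

definition smooth_on_unit :: "(real \<Rightarrow> real) \<Rightarrow> bool" where
  "smooth_on_unit V \<longleftrightarrow> (\<exists>D :: nat \<Rightarrow> real \<Rightarrow> real. D 0 = V \<and>
     (\<forall>k. \<forall>x\<in>{0..1}. (D k has_real_derivative D (Suc k) x) (at x within {0..1})))"

text \<open>G is the Green function of  L u = -u'' - (n-1)/r u' + V u  on (0,1) with u'(0)=u'(1)=0:
  for every pole s in (0,1), G(.,s) is continuous on (0,1), a classical solution of L u = 0 on
  (0,1) minus s, satisfies the Neumann conditions at 0 and 1, and has a jump of -1 in its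
  r-derivative at s (which is the meaning of L G(.,s) = delta_s in distributions).\<close>
definition green_fn :: "nat \<Rightarrow> (real \<Rightarrow> real) \<Rightarrow> (real \<Rightarrow> real \<Rightarrow> real) \<Rightarrow> bool" where
  "green_fn n V G \<longleftrightarrow> (\<forall>s\<in>{0<..<1}.
     continuous_on {0<..<1} (\<lambda>r. G r s) \<and>
     (\<forall>r\<in>{0<..<1} - {s}.
        (\<lambda>x. G x s) differentiable (at r) \<and>
        deriv (\<lambda>x. G x s) differentiable (at r) \<and>
        - deriv (deriv (\<lambda>x. G x s)) r - (real n - 1) / r * deriv (\<lambda>x. G x s) r
          + V r * G r s = 0) \<and>
     ((\<lambda>r. deriv (\<lambda>x. G x s) r) \<longlongrightarrow> 0) (at_right 0) \<and>
     ((\<lambda>r. deriv (\<lambda>x. G x s) r) \<longlongrightarrow> 0) (at_left 1) \<and>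
     (\<exists>a b. ((\<lambda>r. deriv (\<lambda>x. G x s) r) \<longlongrightarrow> a) (at_left s) \<and>
            ((\<lambda>r. deriv (\<lambda>x. G x s) r) \<longlongrightarrow> b) (at_right s) \<and> b - a = -1))"

definition F_fun :: "nat \<Rightarrow> (real \<Rightarrow> real \<Rightarrow> real) \<Rightarrow> real \<Rightarrow> real" where
  "F_fun n G r = sphere_area n * r ^ (n - 1) / G r r"

end

theory Submission
  imports Defs
begin


definition gd :: "(real \<Rightarrow> real \<Rightarrow> real) \<Rightarrow> real \<Rightarrow> real \<Rightarrow> real" where
  "gd G s = deriv (\<lambda>y. G y s)"

definition Wr :: "nat \<Rightarrow> (real \<Rightarrow> real \<Rightarrow> real) \<Rightarrow> real \<Rightarrow> real \<Rightarrow> real \<Rightarrow> real" where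
  "Wr n G s t x = x^(n-1) * (G x s * gd G t x - gd G s x * G x t)"

lemma gfacts:
  assumes g: "green_fn n V G" and s: "s \<in> {0<..<1}" and x: "x \<in> {0<..<1}" "x \<noteq> s"
  shows "((\<lambda>y. G y s) has_real_derivative gd G s x) (at x)"
    "(gd G s has_real_derivative deriv (gd G s) x) (at x)"
    "deriv (gd G s) x = V x * G x s - (real n - 1) / x * gd G s x"
proof -
  have h: "(\<lambda>x. G x s) differentiable (at x) \<and>
        deriv (\<lambda>x. G x s) differentiable (at x) \<and>
        - deriv (deriv (\<lambda>x. G x s)) x - (real n - 1) / x * deriv (\<lambda>x. G x s) x
          + V x * G x s = 0"
    using g s x unfolding green_fn_def by blast
  show "((\<lambda>y. G y s) has_real_derivative gd G s x) (at x)"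
    using h by (simp add: gd_def DERIV_deriv_iff_real_differentiable)
  show "(gd G s has_real_derivative deriv (gd G s) x) (at x)"
    using h by (simp add: gd_def DERIV_deriv_iff_real_differentiable)
  show "deriv (gd G s) x = V x * G x s - (real n - 1) / x * gd G s x"
    using h by (simp add: gd_def algebra_simps)
qed

lemma gcont:
  assumes g: "green_fn n V G" and s: "s \<in> {0<..<1}" and x: "x \<in> {0<..<1}"
  shows "isCont (\<lambda>y. G y s) x"
proof -
  have "continuous_on {0<..<1} (\<lambda>r. G r s)" using g s unfolding green_fn_def by blast
  then show ?thesis using x by (simp add: continuous_on_eq_continuous_at)
qed

lemma gdcont:
  assumes g: "green_fn n V G" and s: "s \<in> {0<..<1}" and x: "x \<in> {0<..<1}" "x \<noteq> s"
  shows "isCont (gd G s) x"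
  using gfacts(2)[OF g s x] by (rule DERIV_isCont)

lemma W_deriv:
  assumes g: "green_fn n V G" and n: "n \<ge> 2" and s: "s \<in> {0<..<1}" and t: "t \<in> {0<..<1}"
    and x: "x \<in> {0<..<1}" "x \<noteq> s" "x \<noteq> t"
  shows "(Wr n G s t has_real_derivative 0) (at x)"
proof -
  note a = gfacts[OF g s x(1,2)] and b = gfacts[OF g t x(1,3)]
  have d1: "((\<lambda>x. G x s * gd G t x) has_real_derivative gd G s x * gd G t x + deriv (gd G t) x * G x s) (at x)"
    by (rule DERIV_mult[OF a(1) b(2)])
  have d2: "((\<lambda>x. gd G s x * G x t) has_real_derivative deriv (gd G s) x * G x t + gd G t x * gd G s x) (at x)"
    by (rule DERIV_mult[OF a(2) b(1)])
  have d3: "((\<lambda>x. G x s * gd G t x - gd G s x * G x t) has_real_derivative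
     (gd G s x * gd G t x + deriv (gd G t) x * G x s) - (deriv (gd G s) x * G x t + gd G t x * gd G s x)) (at x)"
    by (rule DERIV_diff[OF d1 d2])
  have d4: "((\<lambda>x. x^(n-1) * (G x s * gd G t x - gd G s x * G x t)) has_real_derivative
     real (n-1) * x^(n-1-1) * (G x s * gd G t x - gd G s x * G x t) +
     ((gd G s x * gd G t x + deriv (gd G t) x * G x s) - (deriv (gd G s) x * G x t + gd G t x * gd G s x)) * x^(n-1)) (at x)"
    using DERIV_mult[OF DERIV_pow[of "n-1"] d3] by (simp add: mult.commute)
  have "real (n-1) * x^(n-1-1) * (G x s * gd G t x - gd G s x * G x t) +
     ((gd G s x * gd G t x + deriv (gd G t) x * G x s) - (deriv (gd G s) x * G x t + gd G t x * gd G s x)) * x^(n-1) = 0"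
  proof -
    have xp: "x^(n-1) = x * x^(n-1-1)" using n by (cases "n-1") auto
    have "real (n-1) = real n - 1" using n by simp
    then show ?thesis unfolding a(3) b(3) xp using x by (simp add: field_simps)
  qed
  with d4 show ?thesis unfolding Wr_def[abs_def] by simp
qed

lemma W_const:
  assumes g: "green_fn n V G" and n: "n \<ge> 2" and s: "s \<in> {0<..<1}" and t: "t \<in> {0<..<1}"
    and cd: "0 \<le> c" "d \<le> 1" and ns: "s \<notin> {c<..<d}" and nt: "t \<notin> {c<..<d}"
  shows "\<exists>C. \<forall>x\<in>{c<..<d}. Wr n G s t x = C"
proof (rule has_field_derivative_zero_constant)
  fix x assume x: "x \<in> {c<..<d}"
  then have "x \<in> {0<..<1}" "x \<noteq> s" "x \<noteq> t" using cd ns nt by auto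
  from W_deriv[OF g n s t this] show "(Wr n G s t has_field_derivative 0) (at x within {c<..<d})"
    by (rule has_field_derivative_at_within)
qed simp

lemma bound_int:
  fixes f f' :: "real \<Rightarrow> real"
  assumes "c < d" "d - c \<le> 1" and df: "\<And>x. x \<in> {c<..<d} \<Longrightarrow> (f has_real_derivative f' x) (at x)"
    and b: "\<And>x. x \<in> {c<..<d} \<Longrightarrow> \<bar>f' x\<bar> \<le> 1"
  shows "\<forall>x\<in>{c<..<d}. \<bar>f x\<bar> \<le> \<bar>f ((c+d)/2)\<bar> + 1"
proof
  fix x assume x: "x \<in> {c<..<d}"
  have m: "(c+d)/2 \<in> {c<..<d}" using assms by auto
  have "norm (f x - f ((c+d)/2)) \<le> 1 * norm (x - (c+d)/2)"
    by (rule field_differentiable_bound[where f'=f', OF convex_real_interval(8)[of c d]])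
       (use x assms in \<open>auto intro: has_field_derivative_at_within df b\<close>)
  moreover have "norm (x - (c+d)/2) \<le> 1" using x assms(1,2) by (auto simp: abs_if field_simps)
  ultimately show "\<bar>f x\<bar> \<le> \<bar>f ((c+d)/2)\<bar> + 1" by simp
qed

lemma bnd0:
  assumes g: "green_fn n V G" and s: "s \<in> {0<..<1}"
  shows "\<exists>B. eventually (\<lambda>x. \<bar>G x s\<bar> \<le> B) (at_right 0)"
proof -
  have "(gd G s \<longlongrightarrow> 0) (at_right 0)" using g s unfolding green_fn_def gd_def by blast
  from tendstoD[OF this, of 1] have "eventually (\<lambda>x. \<bar>gd G s x\<bar> < 1) (at_right 0)" by (simp add: dist_real_def)
  then obtain b where b: "b > 0" "\<And>y. y > 0 \<Longrightarrow> y < b \<Longrightarrow> \<bar>gd G s y\<bar> < 1"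
    unfolding eventually_at_right_field by auto
  define d where "d = min b s"
  have d: "0 < d" "d \<le> s" "d \<le> b" using b s by (auto simp: d_def)
  have "\<forall>x\<in>{0<..<d}. \<bar>G x s\<bar> \<le> \<bar>G ((0+d)/2) s\<bar> + 1"
  proof (rule bound_int[where f = "\<lambda>x. G x s" and f' = "gd G s"])
    show "d - 0 \<le> 1" using d s by auto
    fix x assume x: "x \<in> {0<..<d}"
    then show "((\<lambda>x. G x s) has_real_derivative gd G s x) (at x)"
      using gfacts(1)[OF g s] d s by auto
    show "\<bar>gd G s x\<bar> \<le> 1" using b(2)[of x] x d by auto
  qed (use d in auto)
  moreover have "eventually (\<lambda>x. x \<in> {0<..<d}) (at_right 0)" using d by (intro eventually_at_right_real) auto
  ultimately show ?thesis by (intro exI[of _ "\<bar>G (d/2) s\<bar> + 1"]) (auto elim!: eventually_mono)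
qed

lemma bnd1:
  assumes g: "green_fn n V G" and s: "s \<in> {0<..<1}"
  shows "\<exists>B. eventually (\<lambda>x. \<bar>G x s\<bar> \<le> B) (at_left 1)"
proof -
  have "(gd G s \<longlongrightarrow> 0) (at_left 1)" using g s unfolding green_fn_def gd_def by blast
  from tendstoD[OF this, of 1] have "eventually (\<lambda>x. \<bar>gd G s x\<bar> < 1) (at_left 1)" by (simp add: dist_real_def)
  then obtain b where b: "b < 1" "\<And>y. y > b \<Longrightarrow> y < 1 \<Longrightarrow> \<bar>gd G s y\<bar> < 1"
    unfolding eventually_at_left_field by auto
  define d where "d = max b s"
  have d: "d < 1" "s \<le> d" "b \<le> d" using b s by (auto simp: d_def)
  have "\<forall>x\<in>{d<..<1}. \<bar>G x s\<bar> \<le> \<bar>G ((d+1)/2) s\<bar> + 1"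
  proof (rule bound_int[where f = "\<lambda>x. G x s" and f' = "gd G s"])
    show "1 - d \<le> 1" using d s by auto
    fix x assume x: "x \<in> {d<..<1}"
    then show "((\<lambda>x. G x s) has_real_derivative gd G s x) (at x)"
      using gfacts(1)[OF g s] d s by auto
    show "\<bar>gd G s x\<bar> \<le> 1" using b(2)[of x] x d by auto
  qed (use d in auto)
  moreover have "eventually (\<lambda>x. x \<in> {d<..<1}) (at_left 1)" using d by (intro eventually_at_left_real) auto
  ultimately show ?thesis by (intro exI[of _ "\<bar>G ((d+1)/2) s\<bar> + 1"]) (auto elim!: eventually_mono)
qed

lemma W_lim0:
  assumes g: "green_fn n V G" and s: "s \<in> {0<..<1}" and t: "t \<in> {0<..<1}"
  shows "(Wr n G s t \<longlongrightarrow> 0) (at_right 0)"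
proof -
  obtain Bs where Bs: "eventually (\<lambda>x. \<bar>G x s\<bar> \<le> Bs) (at_right 0)" using bnd0[OF g s] by blast
  obtain Bt where Bt: "eventually (\<lambda>x. \<bar>G x t\<bar> \<le> Bt) (at_right 0)" using bnd0[OF g t] by blast
  have ls: "(gd G s \<longlongrightarrow> 0) (at_right 0)" using g s unfolding green_fn_def gd_def by blast
  have lt: "(gd G t \<longlongrightarrow> 0) (at_right 0)" using g t unfolding green_fn_def gd_def by blast
  have e1: "eventually (\<lambda>x. x \<in> {0<..<1}) (at_right (0::real))" by (rule eventually_at_right_real) simp
  show ?thesis
  proof (rule Lim_null_comparison)
    show "eventually (\<lambda>x. norm (Wr n G s t x) \<le> Bs * \<bar>gd G t x\<bar> + \<bar>gd G s x\<bar> * Bt) (at_right 0)"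
      using Bs Bt e1
    proof eventually_elim
      case (elim x)
      have p: "\<bar>x^(n-1)\<bar> \<le> 1" using elim(3) by (auto simp: power_le_one abs_of_nonneg)
      have "\<bar>G x s * gd G t x - gd G s x * G x t\<bar> \<le> Bs * \<bar>gd G t x\<bar> + \<bar>gd G s x\<bar> * Bt"
      proof -
        have "\<bar>G x s * gd G t x\<bar> \<le> Bs * \<bar>gd G t x\<bar>" using elim(1) by (simp add: abs_mult mult_right_mono)
        moreover have "\<bar>gd G s x * G x t\<bar> \<le> \<bar>gd G s x\<bar> * Bt" using elim(2) by (simp add: abs_mult mult_left_mono)
        ultimately show ?thesis by linarith
      qed
      then have "\<bar>x^(n-1)\<bar> * \<bar>G x s * gd G t x - gd G s x * G x t\<bar> \<le> 1 * (Bs * \<bar>gd G t x\<bar> + \<bar>gd G s x\<bar> * Bt)"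
        using p by (intro mult_mono) auto
      then show ?case by (simp add: Wr_def abs_mult)
    qed
    show "((\<lambda>x. Bs * \<bar>gd G t x\<bar> + \<bar>gd G s x\<bar> * Bt) \<longlongrightarrow> 0) (at_right 0)"
      using tendsto_add[OF tendsto_mult[OF tendsto_const tendsto_rabs[OF lt]] tendsto_mult[OF tendsto_rabs[OF ls] tendsto_const]]
      by simp
  qed
qed

lemma W_lim1:
  assumes g: "green_fn n V G" and s: "s \<in> {0<..<1}" and t: "t \<in> {0<..<1}"
  shows "(Wr n G s t \<longlongrightarrow> 0) (at_left 1)"
proof -
  obtain Bs where Bs: "eventually (\<lambda>x. \<bar>G x s\<bar> \<le> Bs) (at_left 1)" using bnd1[OF g s] by blast
  obtain Bt where Bt: "eventually (\<lambda>x. \<bar>G x t\<bar> \<le> Bt) (at_left 1)" using bnd1[OF g t] by blast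
  have ls: "(gd G s \<longlongrightarrow> 0) (at_left 1)" using g s unfolding green_fn_def gd_def by blast
  have lt: "(gd G t \<longlongrightarrow> 0) (at_left 1)" using g t unfolding green_fn_def gd_def by blast
  have e1: "eventually (\<lambda>x. x \<in> {0<..<1}) (at_left (1::real))" by (rule eventually_at_left_real) simp
  show ?thesis
  proof (rule Lim_null_comparison)
    show "eventually (\<lambda>x. norm (Wr n G s t x) \<le> Bs * \<bar>gd G t x\<bar> + \<bar>gd G s x\<bar> * Bt) (at_left 1)"
      using Bs Bt e1
    proof eventually_elim
      case (elim x)
      have p: "\<bar>x^(n-1)\<bar> \<le> 1" using elim(3) by (auto simp: power_le_one abs_of_nonneg)
      have "\<bar>G x s * gd G t x - gd G s x * G x t\<bar> \<le> Bs * \<bar>gd G t x\<bar> + \<bar>gd G s x\<bar> * Bt"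
      proof -
        have "\<bar>G x s * gd G t x\<bar> \<le> Bs * \<bar>gd G t x\<bar>" using elim(1) by (simp add: abs_mult mult_right_mono)
        moreover have "\<bar>gd G s x * G x t\<bar> \<le> \<bar>gd G s x\<bar> * Bt" using elim(2) by (simp add: abs_mult mult_left_mono)
        ultimately show ?thesis by linarith
      qed
      then have "\<bar>x^(n-1)\<bar> * \<bar>G x s * gd G t x - gd G s x * G x t\<bar> \<le> 1 * (Bs * \<bar>gd G t x\<bar> + \<bar>gd G s x\<bar> * Bt)"
        using p by (intro mult_mono) auto
      then show ?case by (simp add: Wr_def abs_mult)
    qed
    show "((\<lambda>x. Bs * \<bar>gd G t x\<bar> + \<bar>gd G s x\<bar> * Bt) \<longlongrightarrow> 0) (at_left 1)"
      using tendsto_add[OF tendsto_mult[OF tendsto_const tendsto_rabs[OF lt]] tendsto_mult[OF tendsto_rabs[OF ls] tendsto_const]]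
      by simp
  qed
qed

definition al :: "(real \<Rightarrow> real \<Rightarrow> real) \<Rightarrow> real \<Rightarrow> real" where
  "al G s = Lim (at_left s) (gd G s)"
definition ar :: "(real \<Rightarrow> real \<Rightarrow> real) \<Rightarrow> real \<Rightarrow> real" where
  "ar G s = Lim (at_right s) (gd G s)"

lemma jump:
  assumes g: "green_fn n V G" and s: "s \<in> {0<..<1}"
  shows "(gd G s \<longlongrightarrow> al G s) (at_left s)" "(gd G s \<longlongrightarrow> ar G s) (at_right s)"
    "ar G s - al G s = -1"
proof -
  obtain a b where ab: "(gd G s \<longlongrightarrow> a) (at_left s)" "(gd G s \<longlongrightarrow> b) (at_right s)" "b - a = -1"
    using g s unfolding green_fn_def gd_def by blast
  have "al G s = a" unfolding al_def using ab(1) by (intro tendsto_Lim) auto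
  moreover have "ar G s = b" unfolding ar_def using ab(2) by (intro tendsto_Lim) auto
  ultimately show "(gd G s \<longlongrightarrow> al G s) (at_left s)" "(gd G s \<longlongrightarrow> ar G s) (at_right s)"
    "ar G s - al G s = -1" using ab by auto
qed

lemma isCont_within: "isCont f x \<Longrightarrow> (f \<longlongrightarrow> f x) (at x within S)"
  unfolding isCont_def by (rule tendsto_mono[OF at_le[OF subset_UNIV]])

lemma W_pole:
  assumes g: "green_fn n V G" and s: "s \<in> {0<..<1}" and t: "t \<in> {0<..<1}" and st: "s \<noteq> t"
  shows "(Wr n G s t \<longlongrightarrow> s^(n-1) * (G s s * gd G t s - al G s * G s t)) (at_left s)"
    "(Wr n G s t \<longlongrightarrow> s^(n-1) * (G s s * gd G t s - ar G s * G s t)) (at_right s)"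
proof -
  have c1: "isCont (\<lambda>y. G y s) s" by (rule gcont[OF g s s])
  have c2: "isCont (\<lambda>y. G y t) s" by (rule gcont[OF g t s])
  have c3: "isCont (gd G t) s" using gdcont[OF g t s] st by auto
  note J = jump[OF g s]
  show "(Wr n G s t \<longlongrightarrow> s^(n-1) * (G s s * gd G t s - al G s * G s t)) (at_left s)"
    unfolding Wr_def[abs_def]
    by (intro tendsto_intros isCont_within[OF c1] isCont_within[OF c2] isCont_within[OF c3] J(1))
  show "(Wr n G s t \<longlongrightarrow> s^(n-1) * (G s s * gd G t s - ar G s * G s t)) (at_right s)"
    unfolding Wr_def[abs_def]
    by (intro tendsto_intros isCont_within[OF c1] isCont_within[OF c2] isCont_within[OF c3] J(2))
qed

lemma W_swap: "Wr n G s t x = - Wr n G t s x"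
  unfolding Wr_def by (simp add: algebra_simps)

lemma const_lim:
  fixes f :: "real \<Rightarrow> real"
  assumes "F \<noteq> bot" "eventually (\<lambda>x. f x = C) F" "(f \<longlongrightarrow> L) F"
  shows "C = L"
  using tendsto_unique[OF assms(1) tendsto_eventually[OF assms(2)] assms(3)] .

lemma W_zero_left:
  assumes g: "green_fn n V G" and n: "n \<ge> 2" and s: "s \<in> {0<..<1}" and t: "t \<in> {0<..<1}"
  shows "\<forall>x\<in>{0<..<min s t}. Wr n G s t x = 0"
proof -
  have "\<exists>C. \<forall>x\<in>{0<..<min s t}. Wr n G s t x = C"
    by (rule W_const[OF g n s t]) (use s t in auto)
  then obtain C where C: "\<forall>x\<in>{0<..<min s t}. Wr n G s t x = C" by blast
  have "eventually (\<lambda>x. x \<in> {0<..<min s t}) (at_right 0)"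
    using s t by (intro eventually_at_right_real) auto
  then have "eventually (\<lambda>x. Wr n G s t x = C) (at_right 0)" using C by (auto elim: eventually_mono)
  then have "C = 0" using const_lim W_lim0[OF g s t] by (metis trivial_limit_at_right_real)
  then show ?thesis using C by simp
qed

lemma W_zero_right:
  assumes g: "green_fn n V G" and n: "n \<ge> 2" and s: "s \<in> {0<..<1}" and t: "t \<in> {0<..<1}"
  shows "\<forall>x\<in>{max s t<..<1}. Wr n G s t x = 0"
proof -
  have "\<exists>C. \<forall>x\<in>{max s t<..<1}. Wr n G s t x = C"
    by (rule W_const[OF g n s t]) (use s t in auto)
  then obtain C where C: "\<forall>x\<in>{max s t<..<1}. Wr n G s t x = C" by blast
  have "eventually (\<lambda>x. x \<in> {max s t<..<1}) (at_left 1)"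
    using s t by (intro eventually_at_left_real) auto
  then have "eventually (\<lambda>x. Wr n G s t x = C) (at_left 1)" using C by (auto elim: eventually_mono)
  then have "C = 0" using const_lim W_lim1[OF g s t] by (metis trivial_limit_at_left_real)
  then show ?thesis using C by simp
qed

lemma W_mid:
  assumes g: "green_fn n V G" and n: "n \<ge> 2" and s: "s \<in> {0<..<1}" and t: "t \<in> {0<..<1}" and st: "s < t"
  shows "\<forall>x\<in>{s<..<t}. Wr n G s t x = s^(n-1) * G s t"
    "s^(n-1) * G s t = t^(n-1) * G t s"
proof -
  obtain C where C: "\<forall>x\<in>{s<..<t}. Wr n G s t x = C"
    using W_const[OF g n s t, of s t] s t by auto
  have L1: "0 = s^(n-1) * (G s s * gd G t s - al G s * G s t)"
  proof (rule const_lim[OF _ _ W_pole(1)[OF g s t]])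
    have "eventually (\<lambda>x. x \<in> {0<..<s}) (at_left s)" using s by (intro eventually_at_left_real) auto
    then show "eventually (\<lambda>x. Wr n G s t x = 0) (at_left s)"
      using W_zero_left[OF g n s t] st by (auto elim!: eventually_mono)
  qed (use st in auto)
  have L2: "C = s^(n-1) * (G s s * gd G t s - ar G s * G s t)"
  proof (rule const_lim[OF _ _ W_pole(2)[OF g s t]])
    have "eventually (\<lambda>x. x \<in> {s<..<t}) (at_right s)" using st by (intro eventually_at_right_real) auto
    then show "eventually (\<lambda>x. Wr n G s t x = C) (at_right s)"
      using C by (auto elim!: eventually_mono)
  qed (use st in auto)
  have L3: "0 = t^(n-1) * (G t t * gd G s t - ar G t * G t s)"
  proof (rule const_lim[OF _ _ W_pole(2)[OF g t s]])
    have "eventually (\<lambda>x. x \<in> {t<..<1}) (at_right t)" using t by (intro eventually_at_right_real) auto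
    then show "eventually (\<lambda>x. Wr n G t s x = 0) (at_right t)"
      using W_zero_right[OF g n t s] st by (auto elim!: eventually_mono)
  qed (use st in auto)
  have L4: "- C = t^(n-1) * (G t t * gd G s t - al G t * G t s)"
  proof (rule const_lim[OF _ _ W_pole(1)[OF g t s]])
    have "eventually (\<lambda>x. x \<in> {s<..<t}) (at_left t)" using st by (intro eventually_at_left_real) auto
    then show "eventually (\<lambda>x. Wr n G t s x = - C) (at_left t)"
      using C W_swap[of n G t s] by (auto elim!: eventually_mono)
  qed (use st in auto)
  have j1: "ar G s = al G s - 1" using jump(3)[OF g s] by simp
  have j2: "ar G t = al G t - 1" using jump(3)[OF g t] by simp
  have "C = s^(n-1) * (G s s * gd G t s - al G s * G s t) + s^(n-1) * G s t"
    using L2 unfolding j1 by (simp add: algebra_simps)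
  then have C1: "C = s^(n-1) * G s t" using L1 by simp
  have "- C = t^(n-1) * (G t t * gd G s t - ar G t * G t s) - t^(n-1) * G t s"
    using L4 unfolding j2 by (simp add: algebra_simps)
  then have "- C = 0 - t^(n-1) * G t s" by (simp only: L3[symmetric])
  then have C2: "C = t^(n-1) * G t s" by simp
  show "\<forall>x\<in>{s<..<t}. Wr n G s t x = s^(n-1) * G s t" using C C1 by simp
  show "s^(n-1) * G s t = t^(n-1) * G t s" using C1 C2 by simp
qed



lemma alg:
  fixes E A c c' u u' w w' Al Ar P :: real
  assumes "E \<noteq> 0" "A = c*u" "A = c'*w" "Al = c*u'" "Ar = c'*w'" "Ar - Al = -E" "E = P*(w*u' - w'*u)"
  shows "A = P*u*w" "Al = P*w*u'" "Ar = P*u*w'"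
proof -
  have k: "c*u' - c'*w' = E" using assms(4-6) by simp
  have "E*A = P*(w*u'*A - w'*u*A)" unfolding assms(7) by (simp add: algebra_simps)
  also have "\<dots> = P*(w*u'*(c*u) - w'*u*(c'*w))" using assms(2,3) by metis
  also have "\<dots> = P*u*w*(c*u' - c'*w')" by (simp add: algebra_simps)
  finally have "E*A = P*u*w*E" unfolding k .
  then show "A = P*u*w" using assms(1) by (metis mult.commute mult_left_cancel)
  have "E*Al = P*(w*u'*(c*u') - w'*u'*(c*u))" unfolding assms(4,7) by (simp add: algebra_simps)
  also have "\<dots> = P*(w*u'*(c*u') - w'*u'*(c'*w))" using assms(2,3) by metis
  also have "\<dots> = P*w*u'*(c*u' - c'*w')" by (simp add: algebra_simps)
  finally have "E*Al = P*w*u'*E" unfolding k .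
  then show "Al = P*w*u'" using assms(1) by (metis mult.commute mult_left_cancel)
  have "E*Ar = P*((c'*w)*u'*w' - w'*u*(c'*w'))" unfolding assms(5,7) by (simp add: algebra_simps)
  also have "\<dots> = P*((c*u)*u'*w' - w'*u*(c'*w'))" using assms(2,3) by metis
  also have "\<dots> = P*u*w'*(c*u' - c'*w')" by (simp add: algebra_simps)
  finally have "E*Ar = P*u*w'*E" unfolding k .
  then show "Ar = P*u*w'" using assms(1) by (metis mult.commute mult_left_cancel)
qed

lemma cramer1: "Wr n G t0 t1 x * G x s - Wr n G t0 s x * G x t1 = G x t0 * Wr n G s t1 x"
  unfolding Wr_def by (simp add: algebra_simps)
lemma cramer2: "Wr n G t0 t1 x * gd G s x - Wr n G t0 s x * gd G t1 x = gd G t0 x * Wr n G s t1 x"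
  unfolding Wr_def by (simp add: algebra_simps)

lemma lim_eq:
  fixes f g :: "real \<Rightarrow> real"
  assumes "F \<noteq> bot" "(f \<longlongrightarrow> a) F" "(g \<longlongrightarrow> b) F" "eventually (\<lambda>x. f x = g x) F"
  shows "a = b"
  using tendsto_unique[OF assms(1) assms(2) Lim_transform_eventually[OF assms(3)]] assms(4)
  by (simp add: eq_commute)

lemma diag:
  assumes g: "green_fn n V G" and n: "n \<ge> 2" and t01: "0 < t0" "t0 < s" "s < t1" "t1 < 1"
    and E: "E = t0^(n-1) * G t0 t1" "E \<noteq> 0"
  shows "E * G s s = s^(n-1) * G s t1 * G s t0"
    "E * al G s = s^(n-1) * G s t0 * gd G t1 s"
    "E * ar G s = s^(n-1) * G s t1 * gd G t0 s"
proof -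
  have s: "s \<in> {0<..<1}" and t0: "t0 \<in> {0<..<1}" and t1: "t1 \<in> {0<..<1}" using t01 by auto
  define c where "c = t0^(n-1) * G t0 s"
  define c' where "c' = s^(n-1) * G s t1"
  have WE: "\<forall>x\<in>{t0<..<t1}. Wr n G t0 t1 x = E" using W_mid(1)[OF g n t0 t1] t01 E by auto
  have Wc: "\<forall>x\<in>{t0<..<s}. Wr n G t0 s x = c" using W_mid(1)[OF g n t0 s] t01 c_def by auto
  have Wc': "\<forall>x\<in>{s<..<t1}. Wr n G s t1 x = c'" using W_mid(1)[OF g n s t1] t01 c'_def by auto
  have Z1: "\<forall>x\<in>{0<..<s}. Wr n G s t1 x = 0" using W_zero_left[OF g n s t1] t01 by auto
  have Z2: "\<forall>x\<in>{s<..<1}. Wr n G t0 s x = 0" using W_zero_right[OF g n t0 s] t01 by auto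
  have evl: "eventually (\<lambda>x. x \<in> {t0<..<s}) (at_left s)" using t01 by (intro eventually_at_left_real) auto
  have evr: "eventually (\<lambda>x. x \<in> {s<..<t1}) (at_right s)" using t01 by (intro eventually_at_right_real) auto
  have cs: "isCont (\<lambda>y. G y s) s" "isCont (\<lambda>y. G y t1) s" "isCont (\<lambda>y. G y t0) s"
    "isCont (gd G t1) s" "isCont (gd G t0) s"
    using gcont[OF g s s] gcont[OF g t1 s] gcont[OF g t0 s] gdcont[OF g t1 s] gdcont[OF g t0 s] t01 by auto
  note J = jump[OF g s]
  have A1: "E * G s s = c * G s t1"
  proof (rule lim_eq[where F="at_left s"])
    show "((\<lambda>x. E * G x s) \<longlongrightarrow> E * G s s) (at_left s)" by (intro tendsto_intros isCont_within cs)
    show "((\<lambda>x. c * G x t1) \<longlongrightarrow> c * G s t1) (at_left s)" by (intro tendsto_intros isCont_within cs)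
    show "eventually (\<lambda>x. E * G x s = c * G x t1) (at_left s)" using evl
    proof eventually_elim
      case (elim x) then show ?case using cramer1[of n G t0 t1 x s] WE Wc Z1 t01 by auto
    qed
  qed simp
  have A2: "E * al G s = c * gd G t1 s"
  proof (rule lim_eq[where F="at_left s"])
    show "((\<lambda>x. E * gd G s x) \<longlongrightarrow> E * al G s) (at_left s)" by (intro tendsto_intros J)
    show "((\<lambda>x. c * gd G t1 x) \<longlongrightarrow> c * gd G t1 s) (at_left s)" by (intro tendsto_intros isCont_within cs)
    show "eventually (\<lambda>x. E * gd G s x = c * gd G t1 x) (at_left s)" using evl
    proof eventually_elim
      case (elim x) then show ?case using cramer2[of n G t0 t1 x s] WE Wc Z1 t01 by auto
    qed
  qed simp
  have A3: "E * G s s = c' * G s t0"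
  proof (rule lim_eq[where F="at_right s"])
    show "((\<lambda>x. E * G x s) \<longlongrightarrow> E * G s s) (at_right s)" by (intro tendsto_intros isCont_within cs)
    show "((\<lambda>x. c' * G x t0) \<longlongrightarrow> c' * G s t0) (at_right s)" by (intro tendsto_intros isCont_within cs)
    show "eventually (\<lambda>x. E * G x s = c' * G x t0) (at_right s)" using evr
    proof eventually_elim
      case (elim x) then show ?case using cramer1[of n G t0 t1 x s] WE Wc' Z2 t01 by (auto simp: mult.commute)
    qed
  qed simp
  have A4: "E * ar G s = c' * gd G t0 s"
  proof (rule lim_eq[where F="at_right s"])
    show "((\<lambda>x. E * gd G s x) \<longlongrightarrow> E * ar G s) (at_right s)" by (intro tendsto_intros J)
    show "((\<lambda>x. c' * gd G t0 x) \<longlongrightarrow> c' * gd G t0 s) (at_right s)" by (intro tendsto_intros isCont_within cs)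
    show "eventually (\<lambda>x. E * gd G s x = c' * gd G t0 x) (at_right s)" using evr
    proof eventually_elim
      case (elim x) then show ?case using cramer2[of n G t0 t1 x s] WE Wc' Z2 t01 by (auto simp: mult.commute)
    qed
  qed simp
  have WEs: "E = s^(n-1) * (G s t0 * gd G t1 s - gd G t0 s * G s t1)"
    using WE t01 unfolding Wr_def by auto
  have jj: "E * ar G s - E * al G s = - E" using J(3) by (metis mult.commute mult_minus1 right_diff_distrib)
  note R = alg[OF E(2) A1 A3 A2 A4 jj WEs]
  show "E * G s s = s^(n-1) * G s t1 * G s t0"
    "E * al G s = s^(n-1) * G s t0 * gd G t1 s"
    "E * ar G s = s^(n-1) * G s t1 * gd G t0 s" using R by auto
qed



lemma zero_deriv_on:
  assumes "\<forall>x\<in>{a<..<b}. G x s = (0::real)" "x \<in> {a<..<b}"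
  shows "gd G s x = 0"
proof -
  have "((\<lambda>y. G y s) has_field_derivative 0) (at x)"
    by (rule has_field_derivative_transform_within_open[where f="\<lambda>_. 0" and S="{a<..<b}"]) (use assms in auto)
  then show ?thesis unfolding gd_def by (rule DERIV_imp_deriv)
qed

lemma exists_nonzero:
  assumes g: "green_fn n V G" and n: "n \<ge> 2" and s0: "s0 \<in> {0<..<1}"
  shows "\<exists>t0 t1. 0 < t0 \<and> t0 < s0 \<and> s0 < t1 \<and> t1 < 1 \<and> G t0 t1 \<noteq> 0"
proof (rule ccontr)
  assume "\<not> ?thesis"
  then have H: "\<And>t0 t1. 0 < t0 \<Longrightarrow> t0 < s0 \<Longrightarrow> s0 < t1 \<Longrightarrow> t1 < 1 \<Longrightarrow> G t0 t1 = 0" by blast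
  have sym: "\<And>s t. 0 < s \<Longrightarrow> s < t \<Longrightarrow> t < 1 \<Longrightarrow> s^(n-1) * G s t = t^(n-1) * G t s"
    using W_mid(2)[OF g n] by auto
  have H2: "G t1 t0 = 0" if "0 < t0" "t0 < s0" "s0 < t1" "t1 < 1" for t0 t1
    using sym[of t0 t1] H[OF that] that by auto
  have L: "\<forall>x\<in>{0<..<s0}. G x s0 = 0"
  proof
    fix t0 assume t0: "t0 \<in> {0<..<s0}"
    have "G s0 t0 = 0"
    proof (rule lim_eq[where F="at_right s0"])
      show "((\<lambda>y. G y t0) \<longlongrightarrow> G s0 t0) (at_right s0)"
        using gcont[OF g _ s0, of t0] t0 s0 by (intro isCont_within) auto
      show "((\<lambda>y. 0) \<longlongrightarrow> 0) (at_right s0)" by simp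
      have "eventually (\<lambda>x. x \<in> {s0<..<1}) (at_right s0)" using s0 by (intro eventually_at_right_real) auto
      then show "eventually (\<lambda>y. G y t0 = 0) (at_right s0)"
        by (rule eventually_mono) (use H2 t0 in auto)
    qed simp
    then show "G t0 s0 = 0" using sym[of t0 s0] t0 s0 by auto
  qed
  have R: "\<forall>x\<in>{s0<..<1}. G x s0 = 0"
  proof
    fix t1 assume t1: "t1 \<in> {s0<..<1}"
    have "G s0 t1 = 0"
    proof (rule lim_eq[where F="at_left s0"])
      show "((\<lambda>y. G y t1) \<longlongrightarrow> G s0 t1) (at_left s0)"
        using gcont[OF g _ s0, of t1] t1 s0 by (intro isCont_within) auto
      show "((\<lambda>y. 0) \<longlongrightarrow> 0) (at_left s0)" by simp
      have "eventually (\<lambda>x. x \<in> {0<..<s0}) (at_left s0)" using s0 by (intro eventually_at_left_real) auto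
      then show "eventually (\<lambda>y. G y t1 = 0) (at_left s0)"
        by (rule eventually_mono) (use H t1 in auto)
    qed simp
    then show "G t1 s0 = 0" using sym[of s0 t1] t1 s0 by auto
  qed
  note J = jump[OF g s0]
  have "0 = al G s0"
  proof (rule const_lim[OF _ _ J(1)])
    have "eventually (\<lambda>x. x \<in> {0<..<s0}) (at_left s0)" using s0 by (intro eventually_at_left_real) auto
    then show "eventually (\<lambda>x. gd G s0 x = 0) (at_left s0)"
      by (rule eventually_mono) (use zero_deriv_on[where a=0 and b=s0 and G=G and s=s0, OF L] in auto)
  qed simp
  moreover have "0 = ar G s0"
  proof (rule const_lim[OF _ _ J(2)])
    have "eventually (\<lambda>x. x \<in> {s0<..<1}) (at_right s0)" using s0 by (intro eventually_at_right_real) auto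
    then show "eventually (\<lambda>x. gd G s0 x = 0) (at_right s0)"
      by (rule eventually_mono) (use zero_deriv_on[where a=s0 and b=1 and G=G and s=s0, OF R] in auto)
  qed simp
  ultimately show False using J(3) by simp
qed

theorem proposition4p3:
  fixes n :: nat and V :: "real \<Rightarrow> real" and G :: "real \<Rightarrow> real \<Rightarrow> real" and rbar :: real
  assumes "n \<ge> 2"
    and "smooth_on_unit V"
    and "\<forall>x\<in>{0..1}. V x \<ge> 0"
    and "\<exists>x\<in>{0..1}. V x \<noteq> 0"
    and "green_fn n V G"
    and "rbar \<in> {0<..<1}"
    and "eventually (\<lambda>r. F_fun n G rbar \<le> F_fun n G r) (at rbar)"
  shows "((\<lambda>r. deriv (\<lambda>x. G x rbar) r) \<longlongrightarrow> 1/2) (at_left rbar) \<and>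
         ((\<lambda>r. deriv (\<lambda>x. G x rbar) r) \<longlongrightarrow> -1/2) (at_right rbar)"
proof -
  note n = assms(1) and g = assms(5) and s0 = assms(6) and loc = assms(7)
  obtain t0 t1 where t: "0 < t0" "t0 < rbar" "rbar < t1" "t1 < 1" "G t0 t1 \<noteq> 0"
    using exists_nonzero[OF g n s0] by blast
  define E where "E = t0^(n-1) * G t0 t1"
  have E0: "E \<noteq> 0" using t by (simp add: E_def)
  define p where "p = (\<lambda>s. G s t1 * G s t0)"
  define c0 where "c0 = sphere_area n"
  have c0: "c0 > 0" using n unfolding c0_def sphere_area_def by auto
  define m where "m = c0 * E"
  have m0: "m \<noteq> 0" using c0 E0 by (simp add: m_def)
  have Fp: "F_fun n G s = m / p s" if "s \<in> {t0<..<t1}" for s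
  proof -
    have "E * G s s = s^(n-1) * G s t1 * G s t0"
      using diag(1)[OF g n t(1) _ _ t(4) E_def E0] that by auto
    then have Gss: "G s s = s^(n-1) * p s / E" using E0 by (simp add: p_def field_simps)
    have sp: "s^(n-1) \<noteq> 0" using that t by auto
    show ?thesis unfolding F_fun_def Gss m_def c0_def using sp E0
      by (cases "p s = 0") (auto simp: field_simps)
  qed
  have s0i: "rbar \<in> {t0<..<t1}" using t by auto
  have ev01: "eventually (\<lambda>s. s \<in> {t0<..<t1}) (at rbar)"
    using s0i by (intro eventually_at_in_open') auto
  have ev: "eventually (\<lambda>s. m / p rbar \<le> m / p s) (at rbar)"
    using loc ev01 by eventually_elim (use Fp s0i in auto)
  have du: "((\<lambda>y. G y t1) has_real_derivative gd G t1 rbar) (at rbar)"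
    using gfacts(1)[OF g _ s0] t by auto
  have dw: "((\<lambda>y. G y t0) has_real_derivative gd G t0 rbar) (at rbar)"
    using gfacts(1)[OF g _ s0] t by auto
  have dp: "(p has_real_derivative gd G t1 rbar * G rbar t0 + gd G t0 rbar * G rbar t1) (at rbar)"
    unfolding p_def by (rule DERIV_mult[OF du dw])
  have pc: "isCont p rbar" using dp by (rule DERIV_isCont)
  define q where "q = (\<lambda>s. m * p s)"
  have dq: "(q has_real_derivative m * (gd G t1 rbar * G rbar t0 + gd G t0 rbar * G rbar t1)) (at rbar)"
    unfolding q_def by (rule DERIV_cmult[OF dp])
  have evq: "eventually (\<lambda>s. q s \<le> q rbar) (at rbar) \<or> eventually (\<lambda>s. q rbar \<le> q s) (at rbar)"
  proof (cases "p rbar = 0")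
    case True
    have "eventually (\<lambda>s. q rbar \<le> q s) (at rbar)"
      using ev
    proof eventually_elim
      case (elim s)
      then have "0 \<le> m / p s" using True by simp
      then have "0 \<le> m * p s" by (simp add: zero_le_divide_iff zero_le_mult_iff)
      then show ?case using True by (simp add: q_def)
    qed
    then show ?thesis by blast
  next
    case False
    have "((\<lambda>s. p s * p rbar) \<longlongrightarrow> p rbar * p rbar) (at rbar)"
      using pc unfolding isCont_def by (intro tendsto_intros)
    moreover have "p rbar * p rbar > 0" using False by (metis not_real_square_gt_zero)
    ultimately have "eventually (\<lambda>s. p s * p rbar > 0) (at rbar)" by (rule order_tendstoD)
    then have "eventually (\<lambda>s. q s \<le> q rbar) (at rbar)"
      using ev
    proof eventually_elim
      case (elim s)
      have "(m / p rbar) * (p s * p rbar) \<le> (m / p s) * (p s * p rbar)"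
        using elim by (intro mult_right_mono) auto
      moreover have "p s \<noteq> 0" using elim(1) by auto
      ultimately show ?case using False by (simp add: q_def field_simps)
    qed
    then show ?thesis by blast
  qed
  have D0: "m * (gd G t1 rbar * G rbar t0 + gd G t0 rbar * G rbar t1) = 0"
    using evq
  proof
    assume "eventually (\<lambda>s. q s \<le> q rbar) (at rbar)"
    then obtain d where d: "d > 0" "\<And>x. x \<noteq> rbar \<Longrightarrow> dist x rbar < d \<Longrightarrow> q x \<le> q rbar"
      unfolding eventually_at by auto
    have "\<forall>y. \<bar>rbar - y\<bar> < d \<longrightarrow> q y \<le> q rbar" using d(2) by (metis abs_minus_commute dist_real_def order_refl)
    then show ?thesis by (rule DERIV_local_max[OF dq d(1)])
  next
    assume "eventually (\<lambda>s. q rbar \<le> q s) (at rbar)"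
    then obtain d where d: "d > 0" "\<And>x. x \<noteq> rbar \<Longrightarrow> dist x rbar < d \<Longrightarrow> q rbar \<le> q x"
      unfolding eventually_at by auto
    have "\<forall>y. \<bar>rbar - y\<bar> < d \<longrightarrow> q rbar \<le> q y" using d(2) by (metis abs_minus_commute dist_real_def order_refl)
    then show ?thesis by (rule DERIV_local_min[OF dq d(1)])
  qed
  then have D1: "gd G t1 rbar * G rbar t0 + gd G t0 rbar * G rbar t1 = 0" using m0 by simp
  have a: "E * al G rbar = rbar^(n-1) * G rbar t0 * gd G t1 rbar"
    using diag(2)[OF g n t(1,2,3,4) E_def E0] .
  have b: "E * ar G rbar = rbar^(n-1) * G rbar t1 * gd G t0 rbar"
    using diag(3)[OF g n t(1,2,3,4) E_def E0] .
  have "E * (al G rbar + ar G rbar) = rbar^(n-1) * (gd G t1 rbar * G rbar t0 + gd G t0 rbar * G rbar t1)"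
    using a b by (simp add: algebra_simps)
  then have "al G rbar + ar G rbar = 0" using D1 E0 by simp
  moreover note J = jump[OF g s0]
  ultimately have "al G rbar = 1/2" "ar G rbar = -1/2" by auto
  then show ?thesis using J(1,2) unfolding gd_def by (metis (no_types))
qed

end
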